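(* Let $G=(V,E)$ be a connected graph, let $A\subseteq V$ be nonempty and let $U\subseteq V$. Then for every edge $\{u,v\}\in E$ with $u,v\in U$ there exists $a\in A$ with $u\in D_a$ and $v\in D_a$. In other words, $\bigcup_{a\in A}G[D_a]$ covers every edge of $G[U]$.
   Context: $\delta$ is the shortest-path metric of the unweighted graph $G$. For $S\subseteq V$ and $v\in V$, $\delta(S,v)=\min_{s\in S}\delta(s,v)$. $N_2(a)=\{u\in V:\delta(u,a)\le 2\}$. For $w\in V$, $C_A(w)=\{v\in V:\delta(w,v)<\delta(A,v)\}$. For $a\in A$, the extended Voronoi cell is $D_a=\Big(\bigcup_{b\in N_2(a)}C_A(b)\,\cup\,N_2(a)\Big)\cap U$. *)

theory Defs
  imports Main
begin

definition graph :: "'a set \<Rightarrow> ('a \<Rightarrow> 'a \<Rightarrow> bool) \<Rightarrow> bool" where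
  "graph V E \<longleftrightarrow> finite V \<and> (\<forall>u v. E u v \<longrightarrow> u \<in> V \<and> v \<in> V)
      \<and> (\<forall>u v. E u v \<longrightarrow> E v u) \<and> (\<forall>v. \<not> E v v)"

definition connected :: "'a set \<Rightarrow> ('a \<Rightarrow> 'a \<Rightarrow> bool) \<Rightarrow> bool" where
  "connected V E \<longleftrightarrow> (\<forall>u\<in>V. \<forall>v\<in>V. \<exists>n. (E ^^ n) u v)"

definition gdist :: "('a \<Rightarrow> 'a \<Rightarrow> bool) \<Rightarrow> 'a \<Rightarrow> 'a \<Rightarrow> nat" where
  "gdist E u v = (LEAST n. (E ^^ n) u v)"

definition setdist :: "('a \<Rightarrow> 'a \<Rightarrow> bool) \<Rightarrow> 'a set \<Rightarrow> 'a \<Rightarrow> nat" where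
  "setdist E S v = (INF s\<in>S. gdist E s v)"

definition N2 :: "'a set \<Rightarrow> ('a \<Rightarrow> 'a \<Rightarrow> bool) \<Rightarrow> 'a \<Rightarrow> 'a set" where
  "N2 V E a = {u\<in>V. gdist E u a \<le> 2}"

definition CA :: "'a set \<Rightarrow> ('a \<Rightarrow> 'a \<Rightarrow> bool) \<Rightarrow> 'a set \<Rightarrow> 'a \<Rightarrow> 'a set" where
  "CA V E A w = {v\<in>V. gdist E w v < setdist E A v}"

definition Dcell :: "'a set \<Rightarrow> ('a \<Rightarrow> 'a \<Rightarrow> bool) \<Rightarrow> 'a set \<Rightarrow> 'a set \<Rightarrow> 'a \<Rightarrow> 'a set" where
  "Dcell V E A U a = ((\<Union>b\<in>N2 V E a. CA V E A b) \<union> N2 V E a) \<inter> U"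

end

theory Submission
  imports Defs
begin

lemma walk_sym:
  assumes sym: "\<And>x y. E x y \<Longrightarrow> E y x"
  shows "(E ^^ n) x y \<Longrightarrow> (E ^^ n) y x"
proof (induction n arbitrary: x y)
  case 0 then show ?case by auto
next
  case (Suc n)
  from Suc.prems obtain z where "(E ^^ n) x z" "E z y" by (rule relpowp_Suc_E)
  then show ?case using Suc.IH sym by (meson relpowp_Suc_I2)
qed

lemma gdist_le: "(E ^^ n) x y \<Longrightarrow> gdist E x y \<le> n"
  unfolding gdist_def by (rule Least_le)

lemma gdist_walk: "(E ^^ n) x y \<Longrightarrow> (E ^^ gdist E x y) x y"
  unfolding gdist_def by (rule LeastI)

lemma main:
  assumes g: "graph V E" and c: "connected V E"
    and AV: "A \<subseteq> V" and An: "A \<noteq> {}" and UV: "U \<subseteq> V"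
    and e: "E u v" and uU: "u \<in> U" and vU: "v \<in> U"
    and le: "setdist E A u \<le> setdist E A v"
  shows "\<exists>a\<in>A. u \<in> Dcell V E A U a \<and> v \<in> Dcell V E A U a"
proof -
  have sym: "\<And>x y. E x y \<Longrightarrow> E y x" and inV: "\<And>x y. E x y \<Longrightarrow> x \<in> V \<and> y \<in> V"
    using g unfolding graph_def by auto
  have uV: "u \<in> V" "v \<in> V" using uU vU UV by auto
  have "setdist E A u \<in> (\<lambda>s. gdist E s u) ` A"
    unfolding setdist_def using An by (intro Inf_nat_def1) auto
  then obtain a where aA: "a \<in> A" and ka: "gdist E a u = setdist E A u" by auto
  define k where "k = setdist E A u"
  have "\<exists>n. (E ^^ n) a u" using c aA AV uV unfolding connected_def by auto
  then have wk: "(E ^^ k) a u" using gdist_walk ka k_def by metis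
  have lbv: "k \<le> gdist E s v" if "s \<in> A" for s
  proof -
    have "setdist E A v \<le> gdist E s v" unfolding setdist_def
      by (rule cINF_lower) (auto simp: that)
    then show ?thesis using le k_def by simp
  qed
  have lbu: "k \<le> gdist E s u" if "s \<in> A" for s
    unfolding k_def setdist_def by (rule cINF_lower) (auto simp: that)
  show ?thesis
  proof (cases "k \<le> 1")
    case True
    have w1: "(E ^^ k) u a" using walk_sym[OF sym wk] .
    have w2: "(E ^^ Suc k) v a" using relpowp_Suc_I2[OF sym[OF e] w1] .
    have "u \<in> N2 V E a" using gdist_le[OF w1] True uV unfolding N2_def by auto
    moreover have "v \<in> N2 V E a" using gdist_le[OF w2] True uV unfolding N2_def by auto
    ultimately show ?thesis using aA uU vU unfolding Dcell_def by auto
  next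
    case False
    then have "k = 2 + (k - 2)" by auto
    then have "(E ^^ (2 + (k-2))) a u" using wk by metis
    then obtain b where ab: "(E ^^ 2) a b" and bu: "(E ^^ (k-2)) b u"
      unfolding relpowp_add by auto
    have bV: "b \<in> V"
    proof -
      from ab have "(E ^^ Suc 1) a b" by (simp add: numeral_2_eq_2)
      then obtain z where "(E ^^ 1) a z" "E z b" by (rule relpowp_Suc_E)
      then show ?thesis using inV by auto
    qed
    have bN: "b \<in> N2 V E a" using gdist_le[OF walk_sym[OF sym ab]] bV unfolding N2_def by auto
    have bv: "(E ^^ Suc (k-2)) b v" using relpowp_Suc_I[OF bu e] .
    have "gdist E b u < setdist E A u"
      using gdist_le[OF bu] False k_def by simp
    hence "u \<in> CA V E A b" using uV unfolding CA_def by auto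
    moreover have "gdist E b v < setdist E A v"
      using gdist_le[OF bv] False le k_def by simp
    hence "v \<in> CA V E A b" using uV unfolding CA_def by auto
    ultimately show ?thesis using aA uU vU bN unfolding Dcell_def by auto
  qed
qed

theorem lemma6:
  fixes V A U :: "'a set" and E :: "'a \<Rightarrow> 'a \<Rightarrow> bool"
  assumes "graph V E" and "connected V E"
    and "A \<subseteq> V" and "A \<noteq> {}" and "U \<subseteq> V"
  shows "\<forall>u v. E u v \<and> u \<in> U \<and> v \<in> U \<longrightarrow>
           (\<exists>a\<in>A. u \<in> Dcell V E A U a \<and> v \<in> Dcell V E A U a)"
proof (intro allI impI)
  fix u v assume h: "E u v \<and> u \<in> U \<and> v \<in> U"
  have sym: "E v u" using h assms(1) unfolding graph_def by auto
  show "\<exists>a\<in>A. u \<in> Dcell V E A U a \<and> v \<in> Dcell V E A U a"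
  proof (cases "setdist E A u \<le> setdist E A v")
    case True then show ?thesis using main[OF assms] h by blast
  next
    case False
    then have "setdist E A v \<le> setdist E A u" by simp
    then show ?thesis using main[OF assms sym] h by blast
  qed
qed

end
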